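(* Let $n\geq 1$, $r\geq 1$, $q\geq 2$, and fix an initial configuration of room states. If $n$ prisoners do not have a winning strategy for $r$ rooms with $q$ states (from this initial configuration), then $n+1$ prisoners do not have a winning strategy for $r$ rooms with $q$ states (from this initial configuration).
   Context: The game: there are $n$ prisoners and $r$ rooms; each room contains a switch that is in one of $q$ states $\{0,1,\ldots,q-1\}$. The initial state of every room is known to the prisoners. A warden leads prisoners into rooms one at a time according to a schedule, i.e. an infinite sequence of (prisoner, room) pairs; a schedule is valid if every prisoner visits every room infinitely often. The rooms are indistinguishable to the prisoners, and prisoners have no information about time or other visits: on each visit a prisoner observes only the current state of the room, may change it to any state, and may declare that all prisoners have visited all rooms. A (deterministic) strategy assigns to each prisoner a rule determining, from the sequence of states that prisoner has observed so far (and their own previous actions), what new state to set and whether to declare. A strategy is winning if for every valid schedule some prisoner eventually declares, and every declaration is made only at a time when every prisoner has already visited every room. Strategies may differ between prisoners. *)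

theory Defs
  imports Main
begin

text \<open>
  Prisoners are 0..<n, rooms are 0..<r, switch states are 0..<q.
  A strategy S maps a prisoner p and the list of states p has observed so far
  (the last entry being the state currently observed) to a pair
  (new state to set, whether to declare).  Since a deterministic prisoner's own
  previous actions are a function of its previous observations, the observation
  history determines everything.
  A schedule maps each time step t to the pair (prisoner, room) visiting at time t.
\<close>

type_synonym strategy = "nat \<Rightarrow> nat list \<Rightarrow> nat \<times> bool"
type_synonym schedule = "nat \<Rightarrow> nat \<times> nat"

fun run :: "strategy \<Rightarrow> schedule \<Rightarrow> (nat \<Rightarrow> nat) \<Rightarrow> nat
            \<Rightarrow> (nat \<Rightarrow> nat) \<times> (nat \<Rightarrow> nat list)" where
  "run S sch init 0 = (init, (\<lambda>p. []))"
| "run S sch init (Suc t) =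
     (let (cfg, h) = run S sch init t;
          (p, i) = sch t;
          obs = h p @ [cfg i]
      in (cfg(i := fst (S p obs)), h(p := obs)))"

definition declares :: "strategy \<Rightarrow> schedule \<Rightarrow> (nat \<Rightarrow> nat) \<Rightarrow> nat \<Rightarrow> bool" where
  "declares S sch init t =
     (let (cfg, h) = run S sch init t;
          (p, i) = sch t
      in snd (S p (h p @ [cfg i])))"

definition valid_schedule :: "nat \<Rightarrow> nat \<Rightarrow> schedule \<Rightarrow> bool" where
  "valid_schedule n r sch =
     ((\<forall>t. fst (sch t) < n \<and> snd (sch t) < r) \<and>
      (\<forall>p<n. \<forall>i<r. \<forall>t. \<exists>t'\<ge>t. sch t' = (p, i)))"

definition all_visited :: "nat \<Rightarrow> nat \<Rightarrow> schedule \<Rightarrow> nat \<Rightarrow> bool" where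
  "all_visited n r sch t = (\<forall>p<n. \<forall>i<r. \<exists>t'\<le>t. sch t' = (p, i))"

definition winning_strategy ::
  "nat \<Rightarrow> nat \<Rightarrow> nat \<Rightarrow> (nat \<Rightarrow> nat) \<Rightarrow> strategy \<Rightarrow> bool" where
  "winning_strategy n r q init S =
     ((\<forall>p<n. \<forall>obs. fst (S p obs) < q) \<and>
      (\<forall>sch. valid_schedule n r sch \<longrightarrow>
          (\<exists>t. declares S sch init t) \<and>
          (\<forall>t. declares S sch init t \<longrightarrow> all_visited n r sch t)))"

definition has_winning_strategy :: "nat \<Rightarrow> nat \<Rightarrow> nat \<Rightarrow> (nat \<Rightarrow> nat) \<Rightarrow> bool" where
  "has_winning_strategy n r q init = (\<exists>S. winning_strategy n r q init S)"

end

theory Submission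
  imports Defs
begin

definition gg :: "nat \<Rightarrow> nat \<Rightarrow> nat" where "gg n p = (if p = 0 then n else p)"
definition own :: "nat \<Rightarrow> nat \<Rightarrow> nat" where "own n x = (if x = n then 0 else x)"

definition stp :: "strategy \<Rightarrow> nat \<Rightarrow> nat \<Rightarrow> nat \<Rightarrow> (nat \<Rightarrow> nat list) \<Rightarrow> (nat \<Rightarrow> nat list)" where
"stp S n p ob H = (let H1 = H(p := H p @ [ob]); s1 = fst (S p (H1 p)) in H1(gg n p := H1 (gg n p) @ [s1]))"

definition simH :: "strategy \<Rightarrow> nat \<Rightarrow> nat \<Rightarrow> nat list \<Rightarrow> (nat \<Rightarrow> nat list)" where
"simH S n p obs = fold (stp S n p) obs (\<lambda>_. [])"

definition TT :: "strategy \<Rightarrow> nat \<Rightarrow> strategy" where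
"TT S n p obs = (let H = simH S n p (butlast obs); ob = last obs; H1 = H(p := H p @ [ob]); r1 = S p (H1 p);
   H2 = H1(gg n p := H1 (gg n p) @ [fst r1]); r2 = S (gg n p) (H2 (gg n p)) in (fst r2, snd r1 \<or> snd r2))"

definition dbl :: "nat \<Rightarrow> schedule \<Rightarrow> schedule" where
"dbl n sch u = (if even u then sch (u div 2) else (gg n (fst (sch (u div 2))), snd (sch (u div 2))))"

lemma dbl_even[simp]: "dbl n sch (2*t) = sch t" by (simp add: dbl_def)
lemma dbl_odd[simp]: "dbl n sch (Suc (2*t)) = (gg n (fst (sch t)), snd (sch t))" by (simp add: dbl_def)

lemma simH_snoc: "simH S n p (xs @ [ob]) = stp S n p ob (simH S n p xs)"
  by (simp add: simH_def)

lemma simH_nil[simp]: "simH S n p [] = (\<lambda>_. [])" by (simp add: simH_def)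

lemma TT_app: "TT S n p (xs @ [ob]) = (let H = simH S n p xs; H1 = H(p := H p @ [ob]); r1 = S p (H1 p);
   H2 = H1(gg n p := H1 (gg n p) @ [fst r1]); r2 = S (gg n p) (H2 (gg n p)) in (fst r2, snd r1 \<or> snd r2))"
  by (simp add: TT_def Let_def)

lemma own_iff: "p < n \<Longrightarrow> (own n x = p) = (x = p \<or> x = gg n p)"
  by (auto simp: own_def gg_def)

lemma inv1:
  assumes "\<forall>t. fst (sch t) < n"
  shows "run S (dbl n sch) init (2*t) = (fst (run (TT S n) sch init t),
     \<lambda>x. simH S n (own n x) (snd (run (TT S n) sch init t) (own n x)) x)"
proof (induction t)
  case 0
  then show ?case by simp
next
  case (Suc t)
  obtain cfg h where R: "run (TT S n) sch init t = (cfg, h)" by (cases "run (TT S n) sch init t")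
  obtain p i where P: "sch t = (p, i)" by (cases "sch t")
  have pn: "p < n" using assms P by (metis fst_conv)
  let ?H = "simH S n p (h p)"
  have E: "2 * Suc t = Suc (Suc (2 * t))" by simp
  have hp: "own n p = p" "own n (gg n p) = p" using pn by (auto simp: own_def gg_def)
  have IH': "run S (dbl n sch) init (2*t) = (cfg, \<lambda>x. simH S n (own n x) (h (own n x)) x)" using Suc.IH R by simp
  have R1: "run (TT S n) sch init (Suc t) = (cfg(i := fst (TT S n p (h p @ [cfg i]))), h(p := h p @ [cfg i]))"
    by (simp add: R P Let_def)
  have L: "run S (dbl n sch) init (2 * Suc t) = (cfg(i := fst (TT S n p (h p @ [cfg i]))),
     \<lambda>x. simH S n (own n x) ((h(p := h p @ [cfg i])) (own n x)) x)"
    unfolding E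
    apply (subst run.simps)
    apply (subst run.simps)
    apply (simp only: IH')
    apply (simp add: P hp Let_def TT_app)
    apply (intro conjI impI ext)
    apply (case_tac "own n x = p"; case_tac "own n x = p")
    using own_iff[OF pn] apply (auto simp: simH_snoc stp_def Let_def hp)
    done
  show ?case unfolding L R1 by (simp add: fun_upd_def)
qed

lemma decl:
  assumes "\<forall>t. fst (sch t) < n"
  shows "declares (TT S n) sch init t = (declares S (dbl n sch) init (2*t) \<or> declares S (dbl n sch) init (Suc (2*t)))"
proof -
  obtain cfg h where R: "run (TT S n) sch init t = (cfg, h)" by (cases "run (TT S n) sch init t")
  obtain p i where P: "sch t = (p, i)" by (cases "sch t")
  have pn: "p < n" using assms P by (metis fst_conv)
  have hp: "own n p = p" "own n (gg n p) = p" using pn by (auto simp: own_def gg_def)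
  have IH': "run S (dbl n sch) init (2*t) = (cfg, \<lambda>x. simH S n (own n x) (h (own n x)) x)"
    using inv1[OF assms, of S init t] R by simp
  show ?thesis
    unfolding declares_def
    apply (subst run.simps)
    apply (simp only: IH' R)
    apply (simp add: P hp Let_def TT_app)
    done
qed

lemma dbl_valid:
  assumes "valid_schedule n r sch" "n \<ge> 1"
  shows "valid_schedule (n+1) r (dbl n sch)"
  unfolding valid_schedule_def
proof (intro conjI allI impI)
  fix u
  have B: "\<forall>t. fst (sch t) < n \<and> snd (sch t) < r" using assms(1) unfolding valid_schedule_def by blast
  then have B1: "fst (sch (u div 2)) < n" "snd (sch (u div 2)) < r" by auto
  show "fst (dbl n sch u) < n + 1" "snd (dbl n sch u) < r"
    using B1 unfolding dbl_def gg_def by auto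
next
  fix p i t assume p: "p < n + 1" and i: "i < r"
  show "\<exists>t'\<ge>t. dbl n sch t' = (p, i)"
  proof (cases "p < n")
    case True
    then obtain t' where "t' \<ge> t" "sch t' = (p,i)" using assms i unfolding valid_schedule_def by blast
    then show ?thesis by (intro exI[of _ "2*t'"]) auto
  next
    case False
    then have pn: "p = n" using p by simp
    obtain t' where "t' \<ge> t" "sch t' = (0,i)" using assms i unfolding valid_schedule_def
      by (metis less_le_trans zero_less_one)
    then show ?thesis using pn by (intro exI[of _ "Suc (2*t')"]) (auto simp: gg_def)
  qed
qed

lemma dbl_visited:
  assumes "all_visited (n+1) r (dbl n sch) u" "u \<le> Suc (2*t)" "\<forall>t. fst (sch t) < n"
  shows "all_visited n r sch t"
  unfolding all_visited_def
proof (intro allI impI)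
  fix p i assume p: "p < n" and i: "i < r"
  have p1: "p < n + 1" using p by simp
  obtain t' where t': "t' \<le> u" "dbl n sch t' = (p, i)" using assms(1) p1 i unfolding all_visited_def by blast
  show "\<exists>t'\<le>t. sch t' = (p, i)"
  proof (cases "even t'")
    case True
    then obtain k where k: "t' = 2*k" by (rule evenE)
    have "sch k = (p, i)" using t'(2) k by simp
    moreover have "k \<le> t" using t'(1) k assms(2) by simp
    ultimately show ?thesis by blast
  next
    case False
    then obtain k where k: "t' = Suc (2*k)" by (rule oddE) simp
    have g: "gg n (fst (sch k)) = p" "snd (sch k) = i" using t'(2) k by auto
    have "fst (sch k) < n" using assms(3) by blast
    then have "fst (sch k) = p" using g(1) p unfolding gg_def by (cases "fst (sch k) = 0") auto
    then have "sch k = (p, i)" using g(2) by (metis prod.collapse)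
    moreover have "k \<le> t" using t'(1) k assms(2) by simp
    ultimately show ?thesis by blast
  qed
qed

theorem mainTheorem3:
  fixes n r q :: nat and init :: "nat \<Rightarrow> nat"
  assumes "n \<ge> 1" and "r \<ge> 1" and "q \<ge> 2"
    and "\<forall>i<r. init i < q"
    and "\<not> has_winning_strategy n r q init"
  shows "\<not> has_winning_strategy (n + 1) r q init"
proof
  assume "has_winning_strategy (n + 1) r q init"
  then obtain S where W: "winning_strategy (n+1) r q init S" unfolding has_winning_strategy_def by blast
  have "winning_strategy n r q init (TT S n)"
    unfolding winning_strategy_def
  proof (intro conjI allI impI)
    fix p obs assume p: "p < n"
    have "gg n p < n + 1" using p by (auto simp: gg_def)
    moreover have "\<exists>l. fst (TT S n p obs) = fst (S (gg n p) l)" unfolding TT_def Let_def fst_conv by (rule exI, rule refl)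
    ultimately show "fst (TT S n p obs) < q" using W unfolding winning_strategy_def by metis
  next
    fix sch assume V: "valid_schedule n r sch"
    have B: "\<forall>t. fst (sch t) < n" using V unfolding valid_schedule_def by blast
    have V2: "valid_schedule (n+1) r (dbl n sch)" using dbl_valid[OF V assms(1)] .
    obtain u where u: "declares S (dbl n sch) init u" using W V2 unfolding winning_strategy_def by blast
    show "\<exists>t. declares (TT S n) sch init t"
    proof (cases "even u")
      case True
      then obtain k where "u = 2*k" by (rule evenE)
      then show ?thesis using u decl[OF B] by blast
    next
      case False
      then obtain k where "u = Suc (2*k)" by (rule oddE) simp
      then show ?thesis using u decl[OF B] by blast
    qed
  next
    fix sch t assume V: "valid_schedule n r sch" and D: "declares (TT S n) sch init t"
    have B: "\<forall>t. fst (sch t) < n" using V unfolding valid_schedule_def by blast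
    have V2: "valid_schedule (n+1) r (dbl n sch)" using dbl_valid[OF V assms(1)] .
    have AV: "\<forall>u. declares S (dbl n sch) init u \<longrightarrow> all_visited (n+1) r (dbl n sch) u"
      using W V2 unfolding winning_strategy_def by blast
    from D decl[OF B] have "declares S (dbl n sch) init (2*t) \<or> declares S (dbl n sch) init (Suc (2*t))" by blast
    then show "all_visited n r sch t"
    proof
      assume "declares S (dbl n sch) init (2*t)"
      then show ?thesis using AV dbl_visited[OF _ _ B, of r "2*t" t] by simp
    next
      assume "declares S (dbl n sch) init (Suc (2*t))"
      then show ?thesis using AV dbl_visited[OF _ _ B, of r "Suc (2*t)" t] by simp
    qed
  qed
  then show False using assms(5) unfolding has_winning_strategy_def by blast
qed

end
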